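(* For every $n\ge0$, in $\mathbb{Z}[x,q]$ modulo the ideal generated by $q^2-1$, $$L_n(x)+q\bar L_n(x)\equiv r_n(x,q),\qquad e_n(x)+q\,o_n(x)\equiv p_n(x,q).$$
   Context: $e(n,k)$ (resp. $o(n,k)$) is the number of $k$-element subsets of $\{1,\dots,n\}$ with even (resp. odd) sum, the empty set counting as even; $e_n(x)=\sum_k e(n,k)x^k$, $o_n(x)=\sum_k o(n,k)x^k$. Losanitsch's triangle $(L(n,k))$ is defined by $L(0,k)=[k=0]$, $L(1,k)=[k\le 1]$ for $k\ge0$, $L(n,k)=0$ for $k<0$, and for $n\ge 2$: $L(n,k)=L(n-2,k)+\binom{n-2}{k-1}+L(n-2,k-2)$ (with $\binom{m}{j}=0$ for $j<0$ or $j>m$); $\bar L(n,k)=\binom nk-L(n,k)$; $L_n(x)=\sum_{k=0}^nL(n,k)x^k$, $\bar L_n(x)=\sum_{k=0}^n\bar L(n,k)x^k$. $\begin{bmatrix} n\\ k\end{bmatrix}_q$ is the Gaussian binomial coefficient, $r_n(x,q)=\sum_{k=0}^n\begin{bmatrix} n\\ k\end{bmatrix}_q x^k$ (Rogers–Szegő polynomial) and $p_n(x,q)=\prod_{j=1}^n(1+q^jx)$ ($q$-Newton polynomial). *)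

theory Defs
  imports "HOL-Computational_Algebra.Polynomial"
begin

text \<open>Bivariate integer polynomials Z[x,q] are represented as int poly poly:
  the outer variable is x, the coefficients are polynomials in q.\<close>

definition qvar :: "int poly poly" where
  "qvar = [:[:0, 1:]:]"

definition xvar :: "int poly poly" where
  "xvar = [:0, 1:]"

definition e_cnt :: "nat \<Rightarrow> nat \<Rightarrow> nat" where
  "e_cnt n k = card {S. S \<subseteq> {1..n} \<and> card S = k \<and> even (\<Sum>S)}"

definition o_cnt :: "nat \<Rightarrow> nat \<Rightarrow> nat" where
  "o_cnt n k = card {S. S \<subseteq> {1..n} \<and> card S = k \<and> odd (\<Sum>S)}"

definition e_poly :: "nat \<Rightarrow> int poly poly" where
  "e_poly n = (\<Sum>k\<le>n. of_nat (e_cnt n k) * xvar ^ k)"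

definition o_poly :: "nat \<Rightarrow> int poly poly" where
  "o_poly n = (\<Sum>k\<le>n. of_nat (o_cnt n k) * xvar ^ k)"

text \<open>Losanitsch's triangle; for natural k, the terms with negative index vanish.\<close>
fun Los :: "nat \<Rightarrow> nat \<Rightarrow> nat" where
  "Los 0 k = (if k = 0 then 1 else 0)"
| "Los (Suc 0) k = (if k \<le> 1 then 1 else 0)"
| "Los (Suc (Suc n)) k =
     Los n k + (if k \<ge> 1 then n choose (k - 1) else 0) + (if k \<ge> 2 then Los n (k - 2) else 0)"

definition Losbar :: "nat \<Rightarrow> nat \<Rightarrow> int" where
  "Losbar n k = int (n choose k) - int (Los n k)"

definition L_poly :: "nat \<Rightarrow> int poly poly" where
  "L_poly n = (\<Sum>k\<le>n. of_nat (Los n k) * xvar ^ k)"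

definition Lbar_poly :: "nat \<Rightarrow> int poly poly" where
  "Lbar_poly n = (\<Sum>k\<le>n. of_int (Losbar n k) * xvar ^ k)"

fun gauss_binom :: "nat \<Rightarrow> nat \<Rightarrow> int poly" where
  "gauss_binom n 0 = 1"
| "gauss_binom 0 (Suc k) = 0"
| "gauss_binom (Suc n) (Suc k) = gauss_binom n k + monom 1 (Suc k) * gauss_binom n (Suc k)"

definition rogers_szego :: "nat \<Rightarrow> int poly poly" where
  "rogers_szego n = (\<Sum>k\<le>n. [:gauss_binom n k:] * xvar ^ k)"

definition q_newton :: "nat \<Rightarrow> int poly poly" where
  "q_newton n = (\<Prod>j\<in>{1..n}. 1 + qvar ^ j * xvar)"

end

theory Submission
  imports Defs
begin


definition ev :: "int \<Rightarrow> int poly poly \<Rightarrow> int poly" where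
  "ev a P = map_poly (\<lambda>c. poly c a) P"

lemma ev_add [simp]: "ev a (P + R) = ev a P + ev a R"
  unfolding ev_def by (rule poly_eqI) (simp add: coeff_map_poly)

lemma ev_diff [simp]: "ev a (P - R) = ev a P - ev a R"
  unfolding ev_def by (rule poly_eqI) (simp add: coeff_map_poly)

lemma ev_mult [simp]: "ev a (P * R) = ev a P * ev a R"
  unfolding ev_def by (rule poly_eqI) (simp add: coeff_map_poly coeff_mult poly_sum)

lemma ev_const [simp]: "ev a [:c:] = [:poly c a:]"
  unfolding ev_def by (simp add: map_poly_pCons)

lemma ev_smult [simp]: "ev a (smult c P) = smult (poly c a) (ev a P)"
proof -
  have "ev a (smult c P) = ev a ([:c:] * P)" by simp
  also have "\<dots> = smult (poly c a) (ev a P)" by (simp only: ev_mult ev_const) simp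
  finally show ?thesis .
qed

lemma ev_1 [simp]: "ev a 1 = 1"
  unfolding ev_def by simp

lemma ev_0 [simp]: "ev a 0 = 0"
  by (simp add: ev_def)

lemma ev_sum [simp]: "ev a (sum f A) = (\<Sum>x\<in>A. ev a (f x))"
  by (induction A rule: infinite_finite_induct) auto

lemma ev_prod [simp]: "ev a (prod f A) = (\<Prod>x\<in>A. ev a (f x))"
  by (induction A rule: infinite_finite_induct) auto

lemma ev_power [simp]: "ev a (P ^ k) = ev a P ^ k"
  by (induction k) auto

lemma ev_of_nat [simp]: "ev a (of_nat c) = of_nat c"
  by (simp add: of_nat_poly)

lemma ev_of_int [simp]: "ev a (of_int c) = of_int c"
  by (simp add: of_int_poly)

lemma ev_xvar [simp]: "ev a xvar = [:0,1:]"
  unfolding xvar_def ev_def by (simp add: map_poly_pCons)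

lemma ev_qvar [simp]: "ev a qvar = [:a:]"
  unfolding qvar_def by simp

lemma key:
  assumes "ev 1 P = 0" "ev (-1) P = 0"
  shows "(qvar ^ 2 - 1) dvd P"
proof -
  have Q: "qvar ^ 2 - 1 = [:[:-1,0,1:]:]"
    unfolding qvar_def by (simp add: power2_eq_square one_pCons)
  have "[:-1,0,1:] dvd coeff P i" for i
  proof -
    have "coeff (ev 1 P) i = 0" "coeff (ev (-1) P) i = 0" using assms by auto
    hence h1: "poly (coeff P i) 1 = 0" and h2: "poly (coeff P i) (-1) = 0"
      by (auto simp: ev_def coeff_map_poly)
    from h1 obtain r where r: "coeff P i = [:-1,1:] * r"
      using poly_eq_0_iff_dvd[of "coeff P i" 1] by (auto elim: dvdE)
    with h2 have "poly r (-1) = 0" by simp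
    then obtain s where s: "r = [:1,1:] * s"
      using poly_eq_0_iff_dvd[of r "-1"] by (auto elim: dvdE)
    have "coeff P i = [:-1,0,1:] * s" using r s by (simp add: algebra_simps)
    thus ?thesis by (rule dvdI)
  qed
  thus ?thesis unfolding Q by (simp add: const_poly_dvd_iff)
qed



lemma gauss_1: "poly (gauss_binom n k) 1 = int (n choose k)"
  by (induction n k rule: gauss_binom.induct) (auto simp: poly_monom)

abbreviation g :: "nat \<Rightarrow> nat \<Rightarrow> int" where "g n k \<equiv> poly (gauss_binom n k) (-1)"

lemma g_Suc: "g (Suc n) (Suc k) = g n k + (-1)^Suc k * g n (Suc k)"
  by (simp add: poly_monom)

lemma g_rec2: "g (Suc (Suc n)) (Suc (Suc k)) = g n k + g n (Suc (Suc k))"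
  unfolding g_Suc by (simp add: algebra_simps)

lemma g_0: "g n 0 = 1" by simp

lemma g_1: "g n 1 = (if even n then 0 else 1)"
  by (induction n) (auto simp: g_Suc poly_monom)

lemma g_big: "n < k \<Longrightarrow> g n k = 0"
  by (induction n k rule: gauss_binom.induct) (auto simp: poly_monom)

lemma Los_g_aux: "(\<forall>k. 2 * int (Los n k) = int (n choose k) + g n k) \<and>
   (\<forall>k. 2 * int (Los (Suc n) k) = int (Suc n choose k) + g (Suc n) k)"
proof (induction n)
  case 0
  have "2 * int (Los 0 k) = int (0 choose k) + g 0 k" for k by (cases k) auto
  moreover have "2 * int (Los 1 k) = int (1 choose k) + g 1 k" for k
    by (cases k; cases "k - 1") (auto simp: g_big)
  ultimately show ?case by simp
next
  case (Suc n)
  have "2 * int (Los (Suc (Suc n)) k) = int (Suc (Suc n) choose k) + g (Suc (Suc n)) k" for k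
  proof (cases k)
    case 0 thus ?thesis using Suc.IH[THEN conjunct1, rule_format, of 0] by simp
  next
    case (Suc j)
    show ?thesis
    proof (cases j)
      case 0
      thus ?thesis using Suc.IH \<open>k = Suc j\<close> by (simp add: g_1 poly_monom)
    next
      case (Suc i)
      have "int (Suc (Suc n) choose Suc (Suc i)) = int (n choose i) + 2 * int (n choose Suc i) + int (n choose Suc (Suc i))"
        by simp
      moreover have "int (Los (Suc (Suc n)) (Suc (Suc i))) = int (Los n (Suc (Suc i))) + int (n choose Suc i) + int (Los n i)"
        by simp
      moreover note Suc.IH[THEN conjunct1, rule_format, of i] Suc.IH[THEN conjunct1, rule_format, of "Suc (Suc i)"]
        g_rec2[of n i]
      ultimately show ?thesis unfolding \<open>k = Suc j\<close> Suc by linarith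
    qed
  qed
  thus ?case using Suc.IH by blast
qed

lemma Los_g: "2 * int (Los n k) = int (n choose k) + g n k"
  using Los_g_aux by blast



lemma ev_part1: "ev a (L_poly n + qvar * Lbar_poly n - rogers_szego n) =
  (\<Sum>k\<le>n. [:int (Los n k) + a * Losbar n k - poly (gauss_binom n k) a:] * [:0,1:]^k)"
  unfolding L_poly_def Lbar_poly_def rogers_szego_def
  by (simp add: sum_distrib_left sum_subtractf[symmetric] sum.distrib[symmetric] algebra_simps
      of_nat_poly of_int_poly smult_add_left smult_diff_left)

lemma part1: "(qvar ^ 2 - 1) dvd (L_poly n + qvar * Lbar_poly n - rogers_szego n)"
proof (rule key)
  show "ev 1 (L_poly n + qvar * Lbar_poly n - rogers_szego n) = 0"
    unfolding ev_part1 by (simp add: gauss_1 Losbar_def)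
  show "ev (-1) (L_poly n + qvar * Lbar_poly n - rogers_szego n) = 0"
    unfolding ev_part1 using Los_g by (simp add: Losbar_def)
qed



abbreviation X :: "int poly" where "X \<equiv> [:0,1:]"

lemma const_pow: "[:c:] ^ j = [:c ^ j:]"
  by (induction j) (auto simp: mult.commute)

lemma prod_smult: "finite B \<Longrightarrow> (\<Prod>j\<in>B. smult (c j) X) = smult (\<Prod>j\<in>B. c j) (X ^ card B)"
  by (induction B rule: finite_induct) (auto simp: mult_ac)

lemma expand:
  assumes "finite A"
  shows "(\<Prod>j\<in>A. 1 + smult (a ^ j) X) = (\<Sum>B\<in>Pow A. smult (a ^ (\<Sum>B)) (X ^ card B))"
proof -
  have "(\<Prod>j\<in>A. 1 + smult (a ^ j) X) = (\<Prod>j\<in>A. smult (a ^ j) X + 1)"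
    by (simp add: add.commute)
  also have "\<dots> = (\<Sum>B\<in>Pow A. (\<Prod>j\<in>B. smult (a ^ j) X) * (\<Prod>j\<in>A-B. 1))"
    by (rule prod_add[OF assms])
  also have "\<dots> = (\<Sum>B\<in>Pow A. smult (a ^ (\<Sum>B)) (X ^ card B))"
  proof (rule sum.cong)
    fix B assume "B \<in> Pow A"
    hence "finite B" using assms finite_subset by auto
    thus "(\<Prod>j\<in>B. smult (a ^ j) X) * (\<Prod>j\<in>A-B. 1) = smult (a ^ (\<Sum>B)) (X ^ card B)"
      using prod_smult[OF \<open>finite B\<close>, of "\<lambda>j. a^j"] by (simp add: power_sum)
  qed simp
  finally show ?thesis .
qed

lemma grp:
  "(\<Sum>B\<in>Pow {1..n}. smult (a ^ (\<Sum>B)) (X ^ card B)) =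
   (\<Sum>k\<le>n. smult (\<Sum>B\<in>{B. B \<in> Pow {1..n} \<and> card B = k}. a ^ (\<Sum>B)) (X ^ k))"
proof -
  have "(\<Sum>B\<in>Pow {1..n}. smult (a ^ (\<Sum>B)) (X ^ card B)) =
    (\<Sum>k\<le>n. \<Sum>B\<in>{B. B \<in> Pow {1..n} \<and> card B = k}. smult (a ^ (\<Sum>B)) (X ^ card B))"
  proof (rule sum.group[symmetric])
    show "card ` Pow {1..n} \<subseteq> {..n}"
    proof
      fix y assume "y \<in> card ` Pow {1..n}"
      then obtain B where "B \<subseteq> {1..n}" "y = card B" by auto
      hence "y \<le> card {1..n}" using card_mono[of "{1..n}" B] by simp
      thus "y \<in> {..n}" by simp
    qed
  qed auto
  also have "\<dots> = (\<Sum>k\<le>n. smult (\<Sum>B\<in>{B. B \<in> Pow {1..n} \<and> card B = k}. a ^ (\<Sum>B)) (X ^ k))"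
    by (rule sum.cong) (auto simp: smult_sum)
  finally show ?thesis .
qed

lemma cnt:
  assumes "a = 1 \<or> a = -1"
  shows "(\<Sum>B\<in>{B. B \<in> Pow {1..n} \<and> card B = k}. a ^ (\<Sum>B)) = int (e_cnt n k) + a * int (o_cnt n k)"
proof -
  let ?S = "{B. B \<in> Pow {1..n} \<and> card B = k}"
  have fin: "finite ?S" by simp
  have pw: "a ^ m = (if even m then 1 else a)" for m
    using assms by (auto elim: evenE oddE simp: power_mult)
  have "(\<Sum>B\<in>?S. a ^ (\<Sum>B)) = (\<Sum>B\<in>?S. if even (\<Sum>B) then 1 else a)"
    by (simp add: pw)
  also have "\<dots> = (\<Sum>B\<in>?S \<inter> {B. even (\<Sum>B)}. 1) + (\<Sum>B\<in>?S \<inter> - {B. even (\<Sum>B)}. a)"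
    by (rule sum.If_cases[OF fin])
  also have "?S \<inter> {B. even (\<Sum>B)} = {S. S \<subseteq> {1..n} \<and> card S = k \<and> even (\<Sum>S)}" by auto
  also have "?S \<inter> - {B. even (\<Sum>B)} = {S. S \<subseteq> {1..n} \<and> card S = k \<and> odd (\<Sum>S)}" by auto
  finally show ?thesis by (simp add: e_cnt_def o_cnt_def)
qed

lemma ev_part2:
  assumes "a = 1 \<or> a = -1"
  shows "ev a (e_poly n + qvar * o_poly n - q_newton n) = 0"
proof -
  have "ev a (q_newton n) = (\<Prod>j\<in>{1..n}. 1 + smult (a ^ j) X)"
    unfolding q_newton_def by (simp add: const_pow)
  also have "\<dots> = (\<Sum>k\<le>n. smult (int (e_cnt n k) + a * int (o_cnt n k)) (X ^ k))"
    unfolding expand[OF finite_atLeastAtMost] grp by (rule sum.cong) (simp_all only: cnt[OF assms])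
  finally have 1: "ev a (q_newton n) = \<dots>" .
  have 2: "ev a (e_poly n + qvar * o_poly n) = (\<Sum>k\<le>n. smult (int (e_cnt n k) + a * int (o_cnt n k)) (X ^ k))"
    unfolding e_poly_def o_poly_def
    by (simp add: sum_distrib_left sum.distrib[symmetric] algebra_simps of_nat_poly smult_add_left)
  show ?thesis using 1 2 by simp
qed

theorem corollary4p2:
  fixes n :: nat
  shows "(qvar ^ 2 - 1) dvd (L_poly n + qvar * Lbar_poly n - rogers_szego n)
       \<and> (qvar ^ 2 - 1) dvd (e_poly n + qvar * o_poly n - q_newton n)"
proof
  show "(qvar ^ 2 - 1) dvd (L_poly n + qvar * Lbar_poly n - rogers_szego n)" by (rule part1)
  show "(qvar ^ 2 - 1) dvd (e_poly n + qvar * o_poly n - q_newton n)"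
    by (rule key; rule ev_part2; simp)
qed

end
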